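(* Consider a system with a set $\mathcal{R}$ of $n$ replicas, each with a unique identifier $\mathrm{id}(r)\in\{0,\dots,n-1\}$, a set $\mathcal{F}\subset\mathcal{R}$ of faulty replicas with $|\mathcal{F}|=f$, and $m$ instances numbered $1,\dots,m$ with $1\le m\le n-f$. Rounds are numbered $1,2,3,\dots$. Every non-faulty replica $r\in\mathcal{R}\setminus\mathcal{F}$ runs the following protocol, maintaining a set $\mathit{failed}$ and a map $\mathit{primary}:\{1,\dots,m\}\to\mathcal{R}$: - Initially $\mathit{failed}=\emptyset$ and $\mathit{primary}[i]$ is the replica with identifier $i-1$, for $1\le i\le m$. - In each round $\rho$, the replica learns a set $D_\rho\subseteq\{1,\dots,m\}$ of instances whose consensus decision in round $\rho$ was a failure. It then (1) sets $\mathit{failed}\leftarrow \mathit{failed}\cup\{\mathit{primary}[i]: i\in D_\rho\}$; and (2) for each $i\in D_\rho$ in increasing order of $i$: lets $\mathit{Im}=\{\mathit{primary}[j]:1\le j\le m\}$ (current values), chooses the replica $p\in\mathcal{R}\setminus(\mathit{failed}\cup \mathit{Im})$ with the smallest identifier, and sets $\mathit{primary}[i]\leftarrow p$. Assume: (a) all non-faulty replicas learn the same set $D_\rho$ in every round $\rho$; and (b) whenever $i\in D_\rho$, the primary of instance $i$ at the start of round $\rho$ (i.e., the common value of $\mathit{primary}[i]$ at non-faulty replicas at the start of round $\rho$, denoted $P_{i,\rho}$) is a faulty replica. For a non-faulty replica $r$ and round $\rho$, let $\mathit{failed}_\rho(r)$ and $\mathit{primary}_\rho(r)$ denote the values of these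 variables at $r$ at the start of round $\rho$. Then for every round $\rho$ and all non-faulty replicas $r,q$: 1. $\mathit{failed}_\rho(r)=\{P_{i,j}: i\in D_j,\ 1\le j<\rho\}$; 2. $\mathit{primary}_\rho(r)$ is an injective function and $\mathit{primary}_\rho(r)[i]\in\mathcal{R}\setminus\mathit{failed}_\rho(r)$ for all $1\le i\le m$; 3. $\mathit{primary}_\rho(r)=\mathit{primary}_\rho(q)$ and $\mathit{failed}_\rho(r)=\mathit{failed}_\rho(q)\subseteq\mathcal{F}$.
   Context: This models the "unified primary replacement protocol" for running $m$ parallel instances of a primary-backup Byzantine fault-tolerant consensus protocol: each instance has a primary replica, and in each round every instance reaches a consensus decision that is either a success or a failure (indicating primary failure), observed identically by all non-faulty replicas; instances whose decision is a failure get their primary replaced. *)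

theory Defs
  imports Main
begin

text \<open>Replicas form a finite set R of some type; idf is the identifier map, a bijection
  from R onto the identifiers 0..n-1.  Instances are the numbers 1..m.
  A replica's local state is a pair (failed, primary) with primary :: nat => replica
  (only its values on 1..m are meaningful).\<close>

definition choose_new :: "'r set \<Rightarrow> ('r \<Rightarrow> nat) \<Rightarrow> 'r set \<Rightarrow> 'r" where
  "choose_new R idf X = (SOME p. p \<in> R - X \<and> (\<forall>q \<in> R - X. idf p \<le> idf q))"

definition init_primary :: "'r set \<Rightarrow> ('r \<Rightarrow> nat) \<Rightarrow> nat \<Rightarrow> 'r" where
  "init_primary R idf = (\<lambda>i. inv_into R idf (i - 1))"

definition round_step ::
  "'r set \<Rightarrow> ('r \<Rightarrow> nat) \<Rightarrow> nat \<Rightarrow> nat set \<Rightarrow> 'r set \<times> (nat \<Rightarrow> 'r) \<Rightarrow> 'r set \<times> (nat \<Rightarrow> 'r)" where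
  "round_step R idf m Dset st =
     (let fl' = fst st \<union> snd st ` Dset;
          pr' = fold (\<lambda>i p. p(i := choose_new R idf (fl' \<union> p ` {1..m})))
                     (sorted_list_of_set Dset) (snd st)
      in (fl', pr'))"

primrec run ::
  "'r set \<Rightarrow> ('r \<Rightarrow> nat) \<Rightarrow> nat \<Rightarrow> (nat \<Rightarrow> nat set) \<Rightarrow> nat \<Rightarrow> 'r set \<times> (nat \<Rightarrow> 'r)" where
  "run R idf m Dr 0 = ({}, init_primary R idf)"
| "run R idf m Dr (Suc k) = round_step R idf m (Dr (Suc k)) (run R idf m Dr k)"

text \<open>Values at the start of round \<rho> (\<rho> \<ge> 1).\<close>
definition failed_at :: "'r set \<Rightarrow> ('r \<Rightarrow> nat) \<Rightarrow> nat \<Rightarrow> (nat \<Rightarrow> nat set) \<Rightarrow> nat \<Rightarrow> 'r set" where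
  "failed_at R idf m Dr \<rho> = fst (run R idf m Dr (\<rho> - 1))"

definition primary_at :: "'r set \<Rightarrow> ('r \<Rightarrow> nat) \<Rightarrow> nat \<Rightarrow> (nat \<Rightarrow> nat set) \<Rightarrow> nat \<Rightarrow> nat \<Rightarrow> 'r" where
  "primary_at R idf m Dr \<rho> = snd (run R idf m Dr (\<rho> - 1))"

end

theory Submission
  imports Defs
begin

lemma choose_new_in:
  assumes "finite R" "R - X \<noteq> {}"
  shows "choose_new R idf X \<in> R - X"
proof -
  have fin: "finite (idf ` (R - X))" using assms(1) by simp
  have ne: "idf ` (R - X) \<noteq> {}" using assms(2) by simp
  have "Min (idf ` (R - X)) \<in> idf ` (R - X)" using Min_in[OF fin ne] .
  then obtain p where p: "p \<in> R - X" "idf p = Min (idf ` (R - X))" by auto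
  have "\<forall>q \<in> R - X. idf p \<le> idf q" using p fin by auto
  hence "\<exists>p. p \<in> R - X \<and> (\<forall>q \<in> R - X. idf p \<le> idf q)" using p by blast
  thus ?thesis unfolding choose_new_def by (rule someI_ex[THEN conjunct1])
qed

lemma fold_inv:
  assumes finR: "finite R" and FR: "F \<subseteq> R" and cardm: "card F + m \<le> card R"
    and flF: "fl \<subseteq> F"
  shows "distinct xs \<Longrightarrow> set xs \<subseteq> {1..m} \<Longrightarrow> inj_on p {1..m} \<Longrightarrow>
     (\<forall>i\<in>{1..m}. p i \<in> R) \<Longrightarrow> (\<forall>i\<in>{1..m}. i \<notin> set xs \<longrightarrow> p i \<notin> fl) \<Longrightarrow>
     (\<forall>i\<in>set xs. p i \<in> fl) \<Longrightarrow>
     inj_on (fold (\<lambda>i p. p(i := choose_new R idf (fl \<union> p ` {1..m}))) xs p) {1..m} \<and>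
     (\<forall>i\<in>{1..m}. fold (\<lambda>i p. p(i := choose_new R idf (fl \<union> p ` {1..m}))) xs p i \<in> R - fl)"
proof (induction xs arbitrary: p)
  case Nil
  then show ?case by simp
next
  case (Cons i xs)
  let ?X = "fl \<union> p ` {1..m}"
  let ?c = "choose_new R idf ?X"
  have im: "i \<in> {1..m}" using Cons.prems by simp
  have finF: "finite F" using finR FR finite_subset by blast
  have sub: "?X \<subseteq> F \<union> p ` ({1..m} - {i})"
  proof
    fix x assume "x \<in> ?X"
    then show "x \<in> F \<union> p ` ({1..m} - {i})"
    proof
      assume "x \<in> fl" thus ?thesis using flF by blast
    next
      assume "x \<in> p ` {1..m}"
      then obtain j where j: "j \<in> {1..m}" "x = p j" by blast
      show ?thesis
      proof (cases "j = i")
        case True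
        then have "x \<in> fl" using Cons.prems(6) j by simp
        thus ?thesis using flF by blast
      qed (use j in blast)
    qed
  qed
  define S where "S = p ` ({1..m} - {i})"
  have c1: "card (F \<union> S) \<le> card F + card S" by (rule card_Un_le)
  have c2: "card S \<le> card ({1..m} - {i})" unfolding S_def by (rule card_image_le) simp
  have c3: "card ({1..m::nat} - {i}) = m - 1" using im by simp
  have m1: "1 \<le> m" using im by simp
  have c4: "card (F \<union> S) < card R" using c1 c2 c3 m1 cardm by linarith
  have finS: "finite (F \<union> S)" using finF unfolding S_def by simp
  have "\<not> R \<subseteq> F \<union> S"
  proof
    assume "R \<subseteq> F \<union> S"
    hence "card R \<le> card (F \<union> S)" using finS by (rule card_mono[rotated])
    thus False using c4 by linarith
  qed
  hence "\<not> R \<subseteq> F \<union> p ` ({1..m} - {i})" unfolding S_def .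
  hence "R - ?X \<noteq> {}" using sub by (metis Diff_eq_empty_iff subset_trans)
  hence c: "?c \<in> R - ?X" by (rule choose_new_in[OF finR])
  let ?p' = "p(i := ?c)"
  have IH2: "inj_on (fold (\<lambda>i p. p(i := choose_new R idf (fl \<union> p ` {1..m}))) xs ?p') {1..m} \<and>
     (\<forall>i\<in>{1..m}. fold (\<lambda>i p. p(i := choose_new R idf (fl \<union> p ` {1..m}))) xs ?p' i \<in> R - fl)"
  proof (rule Cons.IH)
    show "distinct xs" using Cons.prems by simp
    show "set xs \<subseteq> {1..m}" using Cons.prems by simp
    show "inj_on ?p' {1..m}" using Cons.prems(3) c by (intro inj_on_fun_updI) auto
    show "\<forall>j\<in>{1..m}. ?p' j \<in> R" using Cons.prems(4) c by auto
    show "\<forall>j\<in>{1..m}. j \<notin> set xs \<longrightarrow> ?p' j \<notin> fl" using Cons.prems(5) c by auto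
    show "\<forall>j\<in>set xs. ?p' j \<in> fl" using Cons.prems(1,6) by auto
  qed
  show ?case unfolding fold_Cons comp_def by (fact IH2)
qed

lemma step_inv:
  assumes finR: "finite R" and FR: "F \<subseteq> R" and cardm: "card F + m \<le> card R"
    and Ds: "Dset \<subseteq> {1..m}" and fl: "fst st \<subseteq> F" and inj: "inj_on (snd st) {1..m}"
    and inR: "\<forall>i\<in>{1..m}. snd st i \<in> R - fst st" and DF: "\<forall>i\<in>Dset. snd st i \<in> F"
  shows "fst (round_step R idf m Dset st) \<subseteq> F \<and> inj_on (snd (round_step R idf m Dset st)) {1..m}
     \<and> (\<forall>i\<in>{1..m}. snd (round_step R idf m Dset st) i \<in> R - fst (round_step R idf m Dset st))"
proof -
  let ?fl = "fst st \<union> snd st ` Dset"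
  have flF: "?fl \<subseteq> F" using fl DF by blast
  have finD: "finite Dset" using Ds finite_subset by blast
  have "inj_on (fold (\<lambda>i p. p(i := choose_new R idf (?fl \<union> p ` {1..m}))) (sorted_list_of_set Dset) (snd st)) {1..m} \<and>
     (\<forall>i\<in>{1..m}. fold (\<lambda>i p. p(i := choose_new R idf (?fl \<union> p ` {1..m}))) (sorted_list_of_set Dset) (snd st) i \<in> R - ?fl)"
  proof (rule fold_inv[OF finR FR cardm flF])
    show "distinct (sorted_list_of_set Dset)" by simp
    show "set (sorted_list_of_set Dset) \<subseteq> {1..m}" using finD Ds by simp
    show "inj_on (snd st) {1..m}" by fact
    show "\<forall>i\<in>{1..m}. snd st i \<in> R" using inR by blast
    show "\<forall>i\<in>{1..m}. i \<notin> set (sorted_list_of_set Dset) \<longrightarrow> snd st i \<notin> ?fl"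
    proof (intro ballI impI)
      fix i assume i: "i \<in> {1..m}" "i \<notin> set (sorted_list_of_set Dset)"
      hence "i \<notin> Dset" using finD by simp
      moreover have "snd st i \<notin> fst st" using inR i by blast
      ultimately show "snd st i \<notin> ?fl" using inj i Ds by (auto dest: inj_onD)
    qed
    show "\<forall>i\<in>set (sorted_list_of_set Dset). snd st i \<in> ?fl" using finD by simp
  qed
  then show ?thesis using flF unfolding round_step_def Let_def fst_conv snd_conv by blast
qed

lemma run_failed:
  "fst (run R idf m Dr k) = {snd (run R idf m Dr (j - 1)) i | i j. 1 \<le> j \<and> j < Suc k \<and> i \<in> Dr j}"
proof (induction k)
  case 0
  then show ?case by simp
next
  case (Suc k)
  show ?case
    apply (simp add: round_step_def Let_def Suc.IH)
    apply (auto simp: less_Suc_eq)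
    by (rule_tac x=xa in exI, rule_tac x="Suc k" in exI, simp)
qed

lemma run_cong:
  assumes "\<And>j. 1 \<le> j \<Longrightarrow> D1 j = D2 j"
  shows "run R idf m D1 k = run R idf m D2 k"
  by (induction k) (simp_all add: assms)

theorem proposition2:
  fixes R F :: "'r set" and idf :: "'r \<Rightarrow> nat" and n f m :: nat
    and D :: "'r \<Rightarrow> nat \<Rightarrow> nat set"
  assumes "finite R" and "card R = n"
    and "bij_betw idf R {0..<n}"
    and "F \<subset> R" and "card F = f"
    and "1 \<le> m" and "m \<le> n - f"
    and "\<And>r \<rho>. r \<in> R - F \<Longrightarrow> 1 \<le> \<rho> \<Longrightarrow> D r \<rho> \<subseteq> {1..m}"
    and "\<And>r q \<rho>. r \<in> R - F \<Longrightarrow> q \<in> R - F \<Longrightarrow> 1 \<le> \<rho> \<Longrightarrow> D r \<rho> = D q \<rho>"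
    and "\<And>r \<rho> i. r \<in> R - F \<Longrightarrow> 1 \<le> \<rho> \<Longrightarrow> i \<in> D r \<rho> \<Longrightarrow>
           primary_at R idf m (D r) \<rho> i \<in> F"
    and "r \<in> R - F" and "q \<in> R - F" and "1 \<le> \<rho>"
  shows "(failed_at R idf m (D r) \<rho> =
           {primary_at R idf m (D r) j i | i j. 1 \<le> j \<and> j < \<rho> \<and> i \<in> D r j})
    \<and> inj_on (primary_at R idf m (D r) \<rho>) {1..m}
         \<and> (\<forall>i \<in> {1..m}. primary_at R idf m (D r) \<rho> i \<in> R - failed_at R idf m (D r) \<rho>)
    \<and> primary_at R idf m (D r) \<rho> = primary_at R idf m (D q) \<rho>
         \<and> failed_at R idf m (D r) \<rho> = failed_at R idf m (D q) \<rho>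
         \<and> failed_at R idf m (D q) \<rho> \<subseteq> F"
proof -
  have cong: "run R idf m (D r) k = run R idf m (D q) k" for k
    by (rule run_cong) (use assms(9,11,12) in blast)
  have FR: "F \<subseteq> R" using assms(4) by blast
  have fn: "f \<le> n" using assms(1,2,5) FR card_mono by blast
  have cardm: "card F + m \<le> card R" using assms(2,5,7) fn by simp
  have inv: "fst (run R idf m (D r) k) \<subseteq> F \<and> inj_on (snd (run R idf m (D r) k)) {1..m}
     \<and> (\<forall>i\<in>{1..m}. snd (run R idf m (D r) k) i \<in> R - fst (run R idf m (D r) k))" for k
  proof (induction k)
    case 0
    have bij: "bij_betw (inv_into R idf) {0..<n} R" using assms(3) by (rule bij_betw_inv_into)
    have "inj_on (\<lambda>i. inv_into R idf (i - 1)) {1..m}"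
    proof (rule inj_onI)
      fix x y assume xy: "x \<in> {1..m}" "y \<in> {1..m}" "inv_into R idf (x - 1) = inv_into R idf (y - 1)"
      have "x - 1 \<in> {0..<n}" "y - 1 \<in> {0..<n}" using xy assms(7) fn by auto
      hence "x - 1 = y - 1" using xy(3) bij by (metis bij_betw_imp_inj_on inj_onD)
      moreover have "1 \<le> x" "1 \<le> y" using xy by auto
      ultimately show "x = y" by arith
    qed
    moreover have "\<forall>i\<in>{1..m}. inv_into R idf (i - 1) \<in> R"
    proof
      fix i assume i: "i \<in> {1..m}"
      hence "i - 1 \<in> {0..<n}" using assms(7) fn by auto
      thus "inv_into R idf (i - 1) \<in> R" using bij by (rule bij_betw_apply[rotated])
    qed
    ultimately show ?case by (simp add: init_primary_def)
  next
    case (Suc k)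
    have DF: "\<forall>i\<in>D r (Suc k). snd (run R idf m (D r) k) i \<in> F"
      using assms(10)[OF assms(11), of "Suc k"] by (simp add: primary_at_def)
    show ?case
      using step_inv[OF assms(1) FR cardm assms(8)[OF assms(11), of "Suc k"], of "run R idf m (D r) k" idf]
        Suc.IH DF by simp
  qed
  have f1: "failed_at R idf m (D r) \<rho> =
           {primary_at R idf m (D r) j i | i j. 1 \<le> j \<and> j < \<rho> \<and> i \<in> D r j}"
    unfolding failed_at_def primary_at_def run_failed using assms(13) by simp
  show ?thesis
    using f1 inv[of "\<rho> - 1"] cong[of "\<rho> - 1"]
    unfolding failed_at_def primary_at_def by simp
qed

end
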